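(* Let $Z=\{\mathbf{z}_0,\dots,\mathbf{z}_{M-1}\}$ be a time series of $M$ observations of the SDE $(\ast)$ with $\theta=\theta_0$ on the time partition $\{t\}_M$. Let $\widehat{\theta}_M$ be the quasi-maximum likelihood (QML) estimator and $\widehat{\theta}_M(h)$ an order-$\beta$ QML estimator for the parameters of $(\ast)$ given $Z$ (both as defined in the context). Then $$\left|\widehat{\theta}_M(h)-\widehat{\theta}_M\right|\to 0 \quad\text{as } h\to 0 .$$ Moreover, $$E\left(\left|\widehat{\theta}_M(h)-\widehat{\theta}_M\right|\right)\to 0 \quad\text{as } h\to 0,$$ where the expectation is taken with respect to the measure on the underlying probability space generating the realizations of $(\ast)$ with $\theta=\theta_0$.
   Context: Let $(\Omega,\mathcal{F},P)$ be a complete probability space with an increasing right-continuous family $\{\mathcal{F}_t,\ t\ge t_0\}$ of complete sub-$\sigma$-algebras. Consider the $d$-dimensional diffusion $\mathbf{x}$ given by the SDE $$(\ast)\qquad d\mathbf{x}(t)=\mathbf{f}(t,\mathbf{x}(t);\theta)\,dt+\sum_{i=1}^m \mathbf{g}_i(t,\mathbf{x}(t);\theta)\,d\mathbf{w}^i(t),\quad t\ge t_0,$$ where $\mathbf{f},\mathbf{g}_i$ are differentiable, $\mathbf{w}=(\mathbf{w}^1,\dots,\mathbf{w}^m)$ is an $m$-dimensional $\mathcal{F}_t$-adapted standard Wiener process, and $\theta\in\mathcal{D}_\theta$, a compact subset of $\mathbb{R}^p$. Linear growth, uniform Lipschitz and smoothness conditions on $\mathbf{f},\mathbf{g}_i$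 ensuring existence and uniqueness of a strong solution with bounded moments are assumed for all $\theta\in\mathcal{D}_\theta$. Let $\mathbf{z}$ denote the solution with $\theta=\theta_0\in\mathcal{D}_\theta$, $\{t\}_M=\{t_0<t_1<\dots<t_{M-1}\}$ observation times, $\mathbf{z}_k$ the observation of $\mathbf{z}$ at $t_k$, and $Z=\{\mathbf{z}_0,\dots,\mathbf{z}_{M-1}\}$. Exact QML estimator: with $\mu_k=E(\mathbf{x}(t_k)\mid\mathbf{z}_{k-1})$ and $\Sigma_k=E(\mathbf{x}(t_k)\mathbf{x}^\top(t_k)\mid\mathbf{z}_{k-1})-\mu_k\mu_k^\top$ (computed for the solution of $(\ast)$ with parameter $\theta$), $$U_M(\theta,Z)=(M-1)\ln(2\pi)+\sum_{k=1}^{M-1}\Big[\ln\det\Sigma_k+(\mathbf{z}_k-\mu_k)^\top\Sigma_k^{-1}(\mathbf{z}_k-\mu_k)\Big],\qquad \widehat\theta_M=\arg\min_{\theta}U_M(\theta,Z).$$ Order-$\beta$ approximation: let $(\tau)_h=\{\tau_n:\tau_{n+1}-\tau_n\le h\}$ be a time discretization of $[t_0,t_{M-1}]$ with $(\tau)_h\supset\{t\}_M$, and $\mathbf{y}$ a continuous-time process on $[t_0,t_{M-1}]$ (obtained from a discretization of $(\ast)$ on $(\tau)_h$) with $E(\mathbf{y}(t_0)\mid\mathcal{F}_{t_0})=E(\mathbf{x}(t_0)\mid\mathcal{F}_{t_0})$, $E(\mathbf{y}(t_0)\mathbf{y}^\top(t_0)\mid\mathcal{F}_{t_0})=E(\mathbf{x}(t_0)\mathbf{x}^\top(t_0)\mid\mathcal{F}_{t_0})$,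 satisfying $E(|\mathbf{y}(t)|^{2q}\mid\mathcal{F}_{t_k})\le L$ for all $t\in[t_k,t_{k+1}]$, $q=1,2,\dots$, and $$\sup_{t_k\le t\le t_{k+1}}\big|E(g(\mathbf{x}(t))\mid\mathcal{F}_{t_k})-E(g(\mathbf{y}(t))\mid\mathcal{F}_{t_k})\big|\le L_k h^\beta$$ for all consecutive $t_k,t_{k+1}\in\{t\}_M$, all $\theta\in\mathcal{D}_\theta$ and all $g\in\mathcal{C}^{2(\beta+1)}_P(\mathbb{R}^d,\mathbb{R})$ (the $2(\beta+1)$ times continuously differentiable functions which, together with their partial derivatives up to that order, have polynomial growth), where $L,L_k>0$ are constants and $\beta\in\mathbb{N}_+$. The second conditional moment of $\mathbf{y}$ is assumed positive definite and continuous in $\theta\in\mathcal{D}_\theta$. Moreover $\mathbf{y}$ is restarted at observations: $E(\mathbf{y}(t_k)\mid\mathbf{z}_k)=\mathbf{z}_k$ and $E(\mathbf{y}(t_k)\mathbf{y}^\top(t_k)\mid\mathbf{z}_k)=\mathbf{z}_k\mathbf{z}_k^\top$ for all $t_k\in\{t\}_M$. Order-$\beta$ QML estimator: with $\mu_{h,k}=E(\mathbf{y}(t_k)\mid\mathbf{z}_{k-1})$, $\Sigma_{h,k}=E(\mathbf{y}(t_k)\mathbf{y}^\top(t_k)\mid\mathbf{z}_{k-1})-\mu_{h,k}\mu_{h,k}^\top$, $$U_{M,h}(\theta,Z)=(M-1)\ln(2\pi)+\sum_{k=1}^{M-1}\Big[\ln\det\Sigma_{h,k}+(\mathbf{z}_k-\mu_{h,k})^\top\Sigma_{h,k}^{-1}(\mathbf{z}_k-\mu_{h,k})\Big],\qquad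 \widehat\theta_M(h)=\arg\min_\theta U_{M,h}(\theta,Z),$$ where $h$ is the maximum stepsize of $(\tau)_h$. *)

theory Defs
  imports "HOL-Probability.Probability"
begin

definition poly_growth :: "(real^'d \<Rightarrow> real) \<Rightarrow> bool" where
  "poly_growth g \<longleftrightarrow> (\<exists>C q. \<forall>x. \<bar>g x\<bar> \<le> C * (1 + norm x ^ q))"

text \<open>D al is the iterated partial derivative along the list of coordinate directions al,
  with D (i # al) the partial derivative in direction i of D al.\<close>
definition CP :: "nat \<Rightarrow> (real^'d \<Rightarrow> real) \<Rightarrow> bool" where
  "CP n g \<longleftrightarrow> (\<exists>D :: 'd list \<Rightarrow> real^'d \<Rightarrow> real.
      D [] = g \<and>
      (\<forall>al i x. length al < n \<longrightarrow>
          ((\<lambda>s. D al (x + s *\<^sub>R axis i 1)) has_real_derivative D (i # al) x) (at 0)) \<and>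
      (\<forall>al. length al \<le> n \<longrightarrow> continuous_on UNIV (D al) \<and> poly_growth (D al)))"

definition mean_of :: "(real^'d) measure \<Rightarrow> real^'d" where
  "mean_of Q = (\<integral>x. x \<partial>Q)"

definition smom_of :: "(real^'d) measure \<Rightarrow> real^'d^'d" where
  "smom_of Q = (\<chi> i j. \<integral>x. x $ i * x $ j \<partial>Q)"

definition cov_of :: "(real^'d) measure \<Rightarrow> real^'d^'d" where
  "cov_of Q = smom_of Q - (\<chi> i j. mean_of Q $ i * mean_of Q $ j)"

definition posdef :: "real^'d^'d \<Rightarrow> bool" where
  "posdef A \<longleftrightarrow> transpose A = A \<and> (\<forall>v. v \<noteq> 0 \<longrightarrow> v \<bullet> (A *v v) > 0)"

definition mat_inverse :: "real^'d^'d \<Rightarrow> real^'d^'d" where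
  "mat_inverse A = (SOME B. A ** B = mat 1 \<and> B ** A = mat 1)"

text \<open>Gaussian quasi-log-likelihood (times -2) for observations zs 0 .. zs (Nobs-1),
  one-step predicted means mu k and covariances S k, k = 1 .. Nobs-1.\<close>
definition qml_U :: "nat \<Rightarrow> (nat \<Rightarrow> real^'d) \<Rightarrow> (nat \<Rightarrow> real^'d) \<Rightarrow> (nat \<Rightarrow> real^'d^'d) \<Rightarrow> real" where
  "qml_U Nobs zs mu S =
     real (Nobs - 1) * ln (2 * pi) +
     (\<Sum>k\<in>{1..<Nobs}. ln (det (S k)) + (zs k - mu k) \<bullet> (mat_inverse (S k) *v (zs k - mu k)))"

text \<open>Transition laws: PX th k s t is the law of x(t), t in [t_k, t_(k+1)], for the solution
  of the SDE with parameter th started at x(t_k) = s (i.e. the conditional law given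
  x(t_k) = s).\<close>
definition U_exact ::
  "(real^'p \<Rightarrow> nat \<Rightarrow> real^'d \<Rightarrow> real \<Rightarrow> (real^'d) measure) \<Rightarrow> (nat \<Rightarrow> real) \<Rightarrow> nat
   \<Rightarrow> real^'p \<Rightarrow> (nat \<Rightarrow> real^'d) \<Rightarrow> real" where
  "U_exact PX t Nobs th zs =
     qml_U Nobs zs (\<lambda>k. mean_of (PX th (k - 1) (zs (k - 1)) (t k)))
                   (\<lambda>k. cov_of (PX th (k - 1) (zs (k - 1)) (t k)))"

text \<open>Order-beta QML objective U_{M,h}(th, Z), with PY h th k s t the law of the
  approximation y(t) (maximal stepsize h), restarted at y(t_k) = s.\<close>
definition U_approx ::
  "(real \<Rightarrow> real^'p \<Rightarrow> nat \<Rightarrow> real^'d \<Rightarrow> real \<Rightarrow> (real^'d) measure) \<Rightarrow> (nat \<Rightarrow> real) \<Rightarrow> nat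
   \<Rightarrow> real \<Rightarrow> real^'p \<Rightarrow> (nat \<Rightarrow> real^'d) \<Rightarrow> real" where
  "U_approx PY t Nobs h th zs =
     qml_U Nobs zs (\<lambda>k. mean_of (PY h th (k - 1) (zs (k - 1)) (t k)))
                   (\<lambda>k. cov_of (PY h th (k - 1) (zs (k - 1)) (t k)))"

end

theory Submission
  imports Defs
begin


lemma tendsto_det:
  fixes A :: "'a \<Rightarrow> real^'n^'n"
  assumes "(A \<longlongrightarrow> A0) F"
  shows "((\<lambda>x. det (A x)) \<longlongrightarrow> det A0) F"
  unfolding det_def
  apply (rule tendsto_sum)
  apply (rule tendsto_mult[OF tendsto_const])
  apply (rule tendsto_prod)
  apply (rule tendsto_vec_nth)+
  apply (rule assms)
  done

lemma mat_inverse_cramer: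
  fixes A :: "real^'n^'n"
  assumes "det A \<noteq> 0"
  shows "mat_inverse A *v b = (\<chi> k. det(\<chi> i j. if j=k then b$i else A$i$j) / det A)"
proof -
  have inv: "invertible A" using assms invertible_det_nz by blast
  have "A ** mat_inverse A = mat 1 \<and> mat_inverse A ** A = mat 1"
    unfolding mat_inverse_def by (rule someI_ex) (use inv in \<open>simp add: invertible_def\<close>)
  then have "A *v (mat_inverse A *v b) = b"
    by (simp add: matrix_vector_mul_assoc)
  then show ?thesis using cramer[OF assms] by blast
qed

lemma posdef_det: "posdef (C::real^'n^'n) \<Longrightarrow> det C \<noteq> 0"
proof
  assume p: "posdef C" and d: "det C = 0"
  have "\<not> inj ((*v) C)"
    using d det_nz_iff_inj[of "(*v) C"] matrix_vector_mul_linear by (simp add: matrix_of_matrix_vector_mul)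
  then obtain x y where xy: "x \<noteq> y" "C *v x = C *v y" unfolding inj_def by blast
  define v where "v = x - y"
  have "v \<noteq> 0" "C *v v = 0" using xy by (auto simp: v_def matrix_vector_mult_diff_distrib)
  then show False using p unfolding posdef_def by fastforce
qed

definition outer :: "real^'n \<Rightarrow> real^'n^'n" where
  "outer m = (\<chi> i j. m $ i * m $ j)"

definition Fq :: "real^'n \<Rightarrow> real^'n \<Rightarrow> real^'n^'n \<Rightarrow> real" where
  "Fq z m S = ln (det (S - outer m)) + (z - m) \<bullet> (mat_inverse (S - outer m) *v (z - m))"

lemma tendsto_outer: "(m \<longlongrightarrow> m0) F \<Longrightarrow> ((\<lambda>x. outer (m x)) \<longlongrightarrow> outer m0) F"
  unfolding outer_def
  apply (rule vec_tendstoI)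
  apply (rule vec_tendstoI)
  subgoal for i j
    by (simp add: tendsto_mult tendsto_vec_nth)
  done

lemma tendsto_repl:
  fixes C :: "'a \<Rightarrow> real^'n^'n"
  assumes "(C \<longlongrightarrow> C0) F" "(v \<longlongrightarrow> v0) F"
  shows "((\<lambda>x. \<chi> i j. if j = k then v x $ i else C x $ i $ j) \<longlongrightarrow> (\<chi> i j. if j = k then v0 $ i else C0 $ i $ j)) F"
  apply (rule vec_tendstoI)
  apply (rule vec_tendstoI)
  subgoal for i j
    by (cases "j = k") (simp_all add: tendsto_vec_nth assms)
  done

lemma tendsto_cramer:
  fixes C :: "'a \<Rightarrow> real^'n^'n"
  assumes C: "(C \<longlongrightarrow> C0) F" and v: "(v \<longlongrightarrow> v0) F" and d0: "det C0 \<noteq> 0"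
  shows "((\<lambda>x. (\<chi> k. det(\<chi> i j. if j=k then v x $ i else C x $ i $ j) / det (C x))) \<longlongrightarrow>
     (\<chi> k. det(\<chi> i j. if j=k then v0 $ i else C0 $ i $ j) / det C0)) F"
  apply (rule vec_tendstoI)
  apply (simp only: vec_lambda_beta)
  apply (rule tendsto_divide[OF tendsto_det[OF tendsto_repl[OF C v]] tendsto_det[OF C] d0])
  done

lemma tendsto_Fq:
  assumes m: "(m \<longlongrightarrow> m0) F" and S: "(S \<longlongrightarrow> S0) F" and p: "posdef (S0 - outer m0)"
  shows "((\<lambda>x. Fq z (m x) (S x)) \<longlongrightarrow> Fq z m0 S0) F"
proof -
  let ?C = "\<lambda>x. S x - outer (m x)" and ?D = "S0 - outer m0"
  have C: "(?C \<longlongrightarrow> ?D) F" by (intro tendsto_diff S tendsto_outer m)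
  have d0: "det ?D \<noteq> 0" using posdef_det[OF p] .
  have dC: "((\<lambda>x. det (?C x)) \<longlongrightarrow> det ?D) F" by (rule tendsto_det[OF C])
  have ev: "\<forall>\<^sub>F x in F. det (?C x) \<noteq> 0"
    using dC d0 tendsto_imp_eventually_ne by blast
  have v: "((\<lambda>x. z - m x) \<longlongrightarrow> z - m0) F" by (rule tendsto_diff[OF tendsto_const m])
  let ?G = "\<lambda>C v. (\<chi> k. det(\<chi> i j. if j=k then v$i else C$i$j) / det C)"
  have G: "((\<lambda>x. ?G (?C x) (z - m x)) \<longlongrightarrow> ?G ?D (z - m0)) F"
    by (rule tendsto_cramer[OF C v d0])
  have E: "\<forall>\<^sub>F x in F. ln (det (?C x)) + (z - m x) \<bullet> ?G (?C x) (z - m x) = Fq z (m x) (S x)"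
    using ev by eventually_elim (subst Fq_def, subst mat_inverse_cramer, assumption, rule refl)
  have T: "((\<lambda>x. ln (det (?C x)) + (z - m x) \<bullet> ?G (?C x) (z - m x)) \<longlongrightarrow> ln (det ?D) + (z - m0) \<bullet> ?G ?D (z - m0)) F"
    by (rule tendsto_add[OF tendsto_ln[OF dC d0] tendsto_inner[OF v G]])
  have eq: "ln (det ?D) + (z - m0) \<bullet> ?G ?D (z - m0) = Fq z m0 S0"
    by (simp only: Fq_def mat_inverse_cramer[OF d0])
  from Lim_transform_eventually[OF T E] show ?thesis unfolding eq .
qed



lemma poly_growthI: "(\<And>x. \<bar>g x\<bar> \<le> C * (1 + norm x ^ q)) \<Longrightarrow> poly_growth g"
  unfolding poly_growth_def by blast

lemma CP_coord: "CP n (\<lambda>x::real^'d. x $ i)"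
  unfolding CP_def
proof (intro exI[of _ "\<lambda>al. case al of [] \<Rightarrow> (\<lambda>x. x $ i) | [l] \<Rightarrow> (\<lambda>x. if l = i then 1 else 0) | _ \<Rightarrow> (\<lambda>x. 0)"] conjI allI impI)
  fix al :: "'d list" and i' x
  show "((\<lambda>s. (case al of [] \<Rightarrow> (\<lambda>x. x $ i) | [l] \<Rightarrow> (\<lambda>x. if l = i then 1 else 0) | _ \<Rightarrow> (\<lambda>x. 0)) (x + s *\<^sub>R axis i' 1)) has_real_derivative
        (case i' # al of [] \<Rightarrow> (\<lambda>x. x $ i) | [l] \<Rightarrow> (\<lambda>x. if l = i then 1 else 0) | _ \<Rightarrow> (\<lambda>x. 0)) x) (at 0)"
    by (cases al rule: list.exhaust; cases "tl al")
       (auto simp: axis_def intro!: derivative_eq_intros)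
next
  fix al :: "'d list"
  show "continuous_on UNIV (case al of [] \<Rightarrow> (\<lambda>x. x $ i) | [l] \<Rightarrow> (\<lambda>x. if l = i then 1 else 0) | _ \<Rightarrow> (\<lambda>x. 0))"
    by (cases al rule: list.exhaust; cases "tl al") (auto intro!: continuous_intros)
  show "poly_growth (case al of [] \<Rightarrow> (\<lambda>x. x $ i) | [l] \<Rightarrow> (\<lambda>x. if l = i then 1 else 0) | _ \<Rightarrow> (\<lambda>x::real^'d. 0))"
  proof (cases al rule: list.exhaust)
    case Nil
    then show ?thesis by (auto intro!: poly_growthI[where C=1 and q=1] order_trans[OF component_le_norm_cart])
  next
    case (Cons a l)
    then show ?thesis by (cases l) (auto intro!: poly_growthI[where C=1 and q=0])
  qed
qed (simp)



definition Dprod :: "'d \<Rightarrow> 'd \<Rightarrow> 'd list \<Rightarrow> real^'d \<Rightarrow> real" where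
  "Dprod i j al = (case al of [] \<Rightarrow> (\<lambda>x. x $ i * x $ j)
     | [l] \<Rightarrow> (\<lambda>x. (if l = i then x $ j else 0) + (if l = j then x $ i else 0))
     | [l2, l] \<Rightarrow> (\<lambda>x. (if l = i \<and> l2 = j then 1 else 0) + (if l = j \<and> l2 = i then 1 else 0))
     | _ \<Rightarrow> (\<lambda>x. 0))"

lemma Dprod_simps:
  "Dprod i j [] = (\<lambda>x. x $ i * x $ j)"
  "Dprod i j [l] = (\<lambda>x. (if l = i then x $ j else 0) + (if l = j then x $ i else 0))"
  "Dprod i j [l2, l] = (\<lambda>x. (if l = i \<and> l2 = j then 1 else 0) + (if l = j \<and> l2 = i then 1 else 0))"
  "Dprod i j (a # b # c # r) = (\<lambda>x. 0)"
  by (simp_all add: Dprod_def)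

lemma axis_comp: "axis i' (1::real) $ k = (if k = i' then 1 else 0)"
  by (simp add: axis_def)

lemma lin_deriv: "((\<lambda>z. a + z * c) has_real_derivative c) (at 0)"
  by (auto intro!: derivative_eq_intros)

lemma lin_deriv2: "((\<lambda>z. (a + z * c) + (b + z * d)) has_real_derivative c + d) (at 0)"
  by (auto intro!: derivative_eq_intros)

lemma lin_deriv3: "((\<lambda>z. 2 * a + 2 * (z * c)) has_real_derivative 2 * c) (at 0)"
  by (auto intro!: derivative_eq_intros)

lemma poly_growth_const: "poly_growth (\<lambda>x::real^'d. c)"
  by (rule poly_growthI[where C="\<bar>c\<bar>" and q=0]) simp

lemma CP_prod: "CP n (\<lambda>x::real^'d. x $ i * x $ j)"
  unfolding CP_def
proof (intro exI[of _ "Dprod i j"] conjI allI impI)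
  fix al :: "'d list" and i' x
  show "((\<lambda>s. Dprod i j al (x + s *\<^sub>R axis i' 1)) has_real_derivative Dprod i j (i' # al) x) (at 0)"
  proof (cases al)
    case Nil
    have "((\<lambda>s. (x $ i + s * axis i' 1 $ i) * (x $ j + s * axis i' 1 $ j)) has_real_derivative
       (axis i' 1 $ i) * (x $ j + 0 * axis i' 1 $ j) + (x $ i + 0 * axis i' 1 $ i) * axis i' 1 $ j) (at 0)"
      by (intro derivative_eq_intros) auto
    moreover have "(\<lambda>s. Dprod i j al (x + s *\<^sub>R axis i' 1)) = (\<lambda>s. (x $ i + s * axis i' 1 $ i) * (x $ j + s * axis i' 1 $ j))"
      using Nil by (simp add: Dprod_simps)
    moreover have "Dprod i j (i' # al) x = (axis i' 1 $ i) * (x $ j + 0 * axis i' 1 $ j) + (x $ i + 0 * axis i' 1 $ i) * axis i' 1 $ j"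
      using Nil by (simp add: Dprod_simps axis_comp)
    ultimately show ?thesis by simp
  next
    case (Cons l r)
    show ?thesis
    proof (cases r)
      case Nil
      have "((\<lambda>s. (if l = i then x $ j + s * axis i' 1 $ j else 0) + (if l = j then x $ i + s * axis i' 1 $ i else 0)) has_real_derivative
         (if l = i then axis i' 1 $ j else 0) + (if l = j then axis i' 1 $ i else 0)) (at 0)"
        by (cases "l = i"; cases "l = j") (simp_all add: lin_deriv lin_deriv2 lin_deriv3)
      moreover have "(\<lambda>s. Dprod i j al (x + s *\<^sub>R axis i' 1)) = (\<lambda>s. (if l = i then x $ j + s * axis i' 1 $ j else 0) + (if l = j then x $ i + s * axis i' 1 $ i else 0))"
        using Nil Cons by (simp add: Dprod_simps cong: if_cong)
      moreover have "Dprod i j (i' # al) x = (if l = i then axis i' 1 $ j else 0) + (if l = j then axis i' 1 $ i else 0)"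
        using Nil Cons by (simp add: Dprod_simps axis_comp)
      ultimately show ?thesis by simp
    next
      case (Cons l2 r2)
      then show ?thesis using \<open>al = l # r\<close> by (cases r2) (simp_all add: Dprod_simps)
    qed
  qed
next
  fix al :: "'d list"
  show "continuous_on UNIV (Dprod i j al)"
  proof (cases al)
    case Nil then show ?thesis by (simp add: Dprod_simps continuous_intros)
  next
    case (Cons l r)
    show ?thesis
    proof (cases r)
      case Nil then show ?thesis using Cons
        by (cases "l = i"; cases "l = j") (simp_all add: Dprod_simps continuous_intros)
    next
      case (Cons l2 r2)
      then show ?thesis using \<open>al = l # r\<close> by (cases r2) (simp_all add: Dprod_simps continuous_intros)
    qed
  qed
  show "poly_growth (Dprod i j al)"
  proof (cases al rule: list.exhaust)
    case Nil
    have "\<bar>x $ i * x $ j\<bar> \<le> 1 * (1 + norm x ^ 2)" for x :: "real^'d"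
    proof -
      have "\<bar>x $ i * x $ j\<bar> = \<bar>x $ i\<bar> * \<bar>x $ j\<bar>" by (simp add: abs_mult)
      also have "\<dots> \<le> norm x * norm x"
        by (intro mult_mono component_le_norm_cart) auto
      finally show ?thesis by (simp add: power2_eq_square)
    qed
    then show ?thesis using Nil by (auto simp: Dprod_simps intro!: poly_growthI[where C=1 and q=2])
  next
    case (Cons a l)
    show ?thesis
    proof (cases l)
      case Nil
      have H: "\<bar>(if a = i then x $ j else 0) + (if a = j then x $ i else 0)\<bar> \<le> 2 * (1 + norm x ^ 1)" for x :: "real^'d"
        using component_le_norm_cart[of x i] component_le_norm_cart[of x j] by auto
      have "al = [a]" using Nil Cons by simp
      then show ?thesis by (simp only: Dprod_simps) (rule poly_growthI[OF H])
    next
      case (Cons b l')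
      then have "al = a # b # l'" using \<open>al = a # l\<close> by simp
      then show ?thesis
        by (cases l') (simp_all only: Dprod_simps poly_growth_const)
    qed
  qed
qed (simp add: Dprod_def)



lemma integrable_id_pow:
  fixes Q :: "(real^'d) measure"
  assumes P: "prob_space Q" and s: "sets Q = sets borel" and I: "integrable Q (\<lambda>x. norm x ^ q)" and q: "q \<ge> 1"
  shows "integrable Q (\<lambda>x. x)"
proof -
  interpret prob_space Q by (rule P)
  show ?thesis
  proof (rule Bochner_Integration.integrable_bound[where f="\<lambda>x. 1 + norm x ^ q"])
    show "integrable Q (\<lambda>x. 1 + norm x ^ q)" using I by (intro Bochner_Integration.integrable_add) auto
    show "(\<lambda>x. x) \<in> borel_measurable Q" using s by (rule measurable_ident_sets)
    have "norm x \<le> norm (1 + norm x ^ q)" for x :: "real^'d"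
    proof (cases "norm x \<le> 1")
      case True
      have "0 \<le> norm x ^ q" by simp
      moreover have "norm (1 + norm x ^ q) = 1 + norm x ^ q" by simp
      ultimately show ?thesis using True by linarith
    next
      case False
      then have "norm x \<le> norm x ^ q" using q by (intro self_le_power) auto
      then show ?thesis by simp
    qed
    then show "AE x in Q. norm x \<le> norm (1 + norm x ^ q)" by (intro AE_I2)
  qed
qed

lemma mean_comp: "integrable Q (\<lambda>x::real^'d. x) \<Longrightarrow> mean_of Q $ i = (\<integral>x. x $ i \<partial>Q)"
  unfolding mean_of_def using integral_bounded_linear[OF bounded_linear_vec_nth, of Q "\<lambda>x. x" i] by simp

lemma expand_exact: "U_exact PX t Nobs th zs = real (Nobs - 1) * ln (2 * pi) +
   (\<Sum>k\<in>{1..<Nobs}. Fq (zs k) (mean_of (PX th (k - 1) (zs (k - 1)) (t k))) (smom_of (PX th (k - 1) (zs (k - 1)) (t k))))"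
  unfolding U_exact_def U_approx_def qml_U_def
  apply (rule arg_cong[where f="\<lambda>x. _ + x"])
  apply (rule sum.cong[OF refl])
  apply (simp only: Fq_def cov_of_def outer_def)
  done

lemma expand_approx: "U_approx PY t Nobs h th zs = real (Nobs - 1) * ln (2 * pi) +
   (\<Sum>k\<in>{1..<Nobs}. Fq (zs k) (mean_of (PY h th (k - 1) (zs (k - 1)) (t k))) (smom_of (PY h th (k - 1) (zs (k - 1)) (t k))))"
  unfolding U_exact_def U_approx_def qml_U_def
  apply (rule arg_cong[where f="\<lambda>x. _ + x"])
  apply (rule sum.cong[OF refl])
  apply (simp only: Fq_def cov_of_def outer_def)
  done

lemma approx_lim:
  fixes fY :: "real \<Rightarrow> 'a \<Rightarrow> real"
  assumes hh: "(hh \<longlongrightarrow> 0) F" "\<forall>\<^sub>F x in F. hh x > 0" and th: "\<forall>\<^sub>F x in F. th x \<in> Dth"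
   and X: "((\<lambda>x. fX (th x)) \<longlongrightarrow> a) F"
   and L: "\<forall>th\<in>Dth. \<forall>h>0. \<bar>fX th - fY h th\<bar> \<le> L * h ^ beta" and b: "beta \<ge> 1"
  shows "((\<lambda>x. fY (hh x) (th x)) \<longlongrightarrow> a) F"
proof -
  have "((\<lambda>x. fX (th x) - fY (hh x) (th x)) \<longlongrightarrow> 0) F"
  proof (rule Lim_null_comparison)
    show "\<forall>\<^sub>F x in F. norm (fX (th x) - fY (hh x) (th x)) \<le> L * hh x ^ beta"
      using hh(2) th by eventually_elim (use L in auto)
    show "((\<lambda>x. L * hh x ^ beta) \<longlongrightarrow> 0) F"
      using tendsto_mult[OF tendsto_const tendsto_power[OF hh(1)], of L beta] b by (simp add: power_0_left)
  qed
  from tendsto_diff[OF X this] show ?thesis by simp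
qed


theorem theorem1:
  fixes P :: "'w measure"
    and Nobs :: nat
    and t :: "nat \<Rightarrow> real"
    and Dth :: "(real^'p) set"
    and theta0 :: "real^'p"
    and beta :: nat
    and z :: "nat \<Rightarrow> 'w \<Rightarrow> real^'d"
    and PX :: "real^'p \<Rightarrow> nat \<Rightarrow> real^'d \<Rightarrow> real \<Rightarrow> (real^'d) measure"
    and PY :: "real \<Rightarrow> real^'p \<Rightarrow> nat \<Rightarrow> real^'d \<Rightarrow> real \<Rightarrow> (real^'d) measure"
    and thetahat :: "'w \<Rightarrow> real^'p"
    and thetahat_h :: "real \<Rightarrow> 'w \<Rightarrow> real^'p"
  assumes P: "prob_space P"
    and t_incr: "\<And>k. t k < t (Suc k)"
    and Dth: "compact Dth" "theta0 \<in> Dth"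
    and beta: "beta \<ge> 1"
    and z_meas: "\<And>k. k < Nobs \<Longrightarrow> z k \<in> borel_measurable P"
    \<comment> \<open>transition laws of the exact solution x\<close>
    and PX_prob: "\<And>th k s u. th \<in> Dth \<Longrightarrow> prob_space (PX th k s u) \<and> sets (PX th k s u) = sets borel"
    and PX_start: "\<And>th k s. th \<in> Dth \<Longrightarrow> PX th k s (t k) = return borel s"
    and PX_moments: "\<And>th k s u q. th \<in> Dth \<Longrightarrow> integrable (PX th k s u) (\<lambda>x. norm x ^ q)"
    and PX_cont: "\<And>k s. k + 1 < Nobs \<Longrightarrow>
        continuous_on Dth (\<lambda>th. mean_of (PX th k s (t (Suc k)))) \<and>
        continuous_on Dth (\<lambda>th. smom_of (PX th k s (t (Suc k))))"
    and PX_posdef: "\<And>th k s. th \<in> Dth \<Longrightarrow> k + 1 < Nobs \<Longrightarrow> posdef (cov_of (PX th k s (t (Suc k))))"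
    \<comment> \<open>laws of the order-beta approximation y, restarted at the observations\<close>
    and PY_prob: "\<And>h th k s u. h > 0 \<Longrightarrow> th \<in> Dth \<Longrightarrow>
        prob_space (PY h th k s u) \<and> sets (PY h th k s u) = sets borel"
    and PY_restart: "\<And>h th k s. h > 0 \<Longrightarrow> th \<in> Dth \<Longrightarrow> PY h th k s (t k) = return borel s"
    and PY_moments: "\<And>q s. q \<ge> 1 \<Longrightarrow> \<exists>L>0. \<forall>h>0. \<forall>th\<in>Dth. \<forall>k. k + 1 < Nobs \<longrightarrow>
        (\<forall>u\<in>{t k..t (Suc k)}. integrable (PY h th k s u) (\<lambda>x. norm x ^ (2 * q)) \<and>
            (\<integral>x. norm x ^ (2 * q) \<partial>(PY h th k s u)) \<le> L)"
    and weak_order: "\<And>g s. CP (2 * (beta + 1)) g \<Longrightarrow> \<exists>L>0. \<forall>k. k + 1 < Nobs \<longrightarrow>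
        (\<forall>th\<in>Dth. \<forall>h>0. \<forall>u\<in>{t k..t (Suc k)}.
           \<bar>(\<integral>x. g x \<partial>(PX th k s u)) - (\<integral>x. g x \<partial>(PY h th k s u))\<bar> \<le> L * h ^ beta)"
    and PY_smom: "\<And>h k s. h > 0 \<Longrightarrow> k + 1 < Nobs \<Longrightarrow>
        (\<forall>th\<in>Dth. posdef (smom_of (PY h th k s (t (Suc k))))) \<and>
        continuous_on Dth (\<lambda>th. smom_of (PY h th k s (t (Suc k))))"
    \<comment> \<open>the exact QML estimator: the (unique) minimiser of U_M over Dth\<close>
    and thetahat: "\<And>w. w \<in> space P \<Longrightarrow> thetahat w \<in> Dth \<and>
        (\<forall>th\<in>Dth. U_exact PX t Nobs (thetahat w) (\<lambda>k. z k w) \<le> U_exact PX t Nobs th (\<lambda>k. z k w)) \<and>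
        (\<forall>th\<in>Dth. U_exact PX t Nobs th (\<lambda>k. z k w) = U_exact PX t Nobs (thetahat w) (\<lambda>k. z k w)
                   \<longrightarrow> th = thetahat w)"
    and thetahat_meas: "thetahat \<in> borel_measurable P"
    \<comment> \<open>the order-beta QML estimator: a minimiser of U_{M,h} over Dth\<close>
    and thetahat_h: "\<And>h w. h > 0 \<Longrightarrow> w \<in> space P \<Longrightarrow> thetahat_h h w \<in> Dth \<and>
        (\<forall>th\<in>Dth. U_approx PY t Nobs h (thetahat_h h w) (\<lambda>k. z k w) \<le> U_approx PY t Nobs h th (\<lambda>k. z k w))"
    and thetahat_h_meas: "\<And>h. h > 0 \<Longrightarrow> thetahat_h h \<in> borel_measurable P"
  shows "(\<forall>w\<in>space P. ((\<lambda>h. norm (thetahat_h h w - thetahat w)) \<longlongrightarrow> 0) (at_right 0)) \<and>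
         ((\<lambda>h. \<integral>w. norm (thetahat_h h w - thetahat w) \<partial>P) \<longlongrightarrow> 0) (at_right 0)"
proof -
  interpret P: prob_space P by (rule P)
  have tk: "\<And>k. t (Suc k) \<in> {t k..t (Suc k)}" using t_incr less_imp_le by auto
  have mean_bnd: "\<exists>L. \<forall>th\<in>Dth. \<forall>h>0. \<bar>mean_of (PX th k s (t (Suc k))) $ i - mean_of (PY h th k s (t (Suc k))) $ i\<bar> \<le> L * h ^ beta"
    if k: "k + 1 < Nobs" for k s i
  proof -
    obtain L where L: "\<forall>k. k + 1 < Nobs \<longrightarrow> (\<forall>th\<in>Dth. \<forall>h>0. \<forall>u\<in>{t k..t (Suc k)}.
           \<bar>(\<integral>x. x $ i \<partial>(PX th k s u)) - (\<integral>x. x $ i \<partial>(PY h th k s u))\<bar> \<le> L * h ^ beta)"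
      using weak_order[OF CP_coord[of _ i], of s] by blast
    obtain L2 where L2: "\<forall>h>0. \<forall>th\<in>Dth. \<forall>k. k + 1 < Nobs \<longrightarrow>
        (\<forall>u\<in>{t k..t (Suc k)}. integrable (PY h th k s u) (\<lambda>x. norm x ^ (2 * 1)) \<and>
            (\<integral>x. norm x ^ (2 * 1) \<partial>(PY h th k s u)) \<le> L2)"
      using PY_moments[of 1 s] by blast
    show ?thesis
    proof (intro exI ballI allI impI)
      fix th h assume th: "th \<in> Dth" and h: "(h::real) > 0"
      have iX: "integrable (PX th k s (t (Suc k))) (\<lambda>x. x)"
        using PX_prob[OF th] PX_moments[OF th, of k s "t (Suc k)" 1]
        by (intro integrable_id_pow[where q=1]) auto
      have iY: "integrable (PY h th k s (t (Suc k))) (\<lambda>x. x)"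
        using PY_prob[OF h th] L2 h th k tk[of k]
        by (intro integrable_id_pow[where q="2*1"]) auto
      show "\<bar>mean_of (PX th k s (t (Suc k))) $ i - mean_of (PY h th k s (t (Suc k))) $ i\<bar> \<le> L * h ^ beta"
        using L k th h tk[of k] unfolding mean_comp[OF iX] mean_comp[OF iY] by blast
    qed
  qed
  have smom_bnd: "\<exists>L. \<forall>th\<in>Dth. \<forall>h>0. \<bar>smom_of (PX th k s (t (Suc k))) $ i $ j - smom_of (PY h th k s (t (Suc k))) $ i $ j\<bar> \<le> L * h ^ beta"
    if k: "k + 1 < Nobs" for k s i j
  proof -
    obtain L where L: "\<forall>k. k + 1 < Nobs \<longrightarrow> (\<forall>th\<in>Dth. \<forall>h>0. \<forall>u\<in>{t k..t (Suc k)}.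
           \<bar>(\<integral>x. x $ i * x $ j \<partial>(PX th k s u)) - (\<integral>x. x $ i * x $ j \<partial>(PY h th k s u))\<bar> \<le> L * h ^ beta)"
      using weak_order[OF CP_prod[of _ i j], of s] by blast
    show ?thesis unfolding smom_of_def vec_lambda_beta
      by (intro exI[of _ L] ballI allI impI) (use L k tk[of k] in blast)
  qed
  have conv_U: "((\<lambda>x. U_approx PY t Nobs (hh x) (th x) zs) \<longlongrightarrow> U_exact PX t Nobs l zs) F"
    if hh: "(hh \<longlongrightarrow> 0) F" "\<forall>\<^sub>F x in F. hh x > 0" and thl: "(th \<longlongrightarrow> l) F"
      and thD: "\<forall>\<^sub>F x in F. th x \<in> Dth" and l: "l \<in> Dth"
    for F :: "'a filter" and hh th l zs
    unfolding expand_exact expand_approx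
  proof (intro tendsto_add tendsto_const tendsto_sum)
    fix k assume "k \<in> {1..<Nobs}"
    then obtain k' where kk: "k = Suc k'" and k': "k' + 1 < Nobs" by (cases k) auto
    define s where "s = zs k'"
    have mX: "((\<lambda>x. mean_of (PX (th x) k' s (t (Suc k')))) \<longlongrightarrow> mean_of (PX l k' s (t (Suc k')))) F"
      using continuous_on_tendsto_compose[OF PX_cont[OF k', of s, THEN conjunct1] thl l thD] .
    have SX: "((\<lambda>x. smom_of (PX (th x) k' s (t (Suc k')))) \<longlongrightarrow> smom_of (PX l k' s (t (Suc k')))) F"
      using continuous_on_tendsto_compose[OF PX_cont[OF k', of s, THEN conjunct2] thl l thD] .
    have mY: "((\<lambda>x. mean_of (PY (hh x) (th x) k' s (t (Suc k')))) \<longlongrightarrow> mean_of (PX l k' s (t (Suc k')))) F"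
    proof (rule vec_tendstoI)
      fix i
      obtain L where L: "\<forall>th\<in>Dth. \<forall>h>0. \<bar>mean_of (PX th k' s (t (Suc k'))) $ i - mean_of (PY h th k' s (t (Suc k'))) $ i\<bar> \<le> L * h ^ beta"
        using mean_bnd[OF k'] by blast
      show "((\<lambda>x. mean_of (PY (hh x) (th x) k' s (t (Suc k'))) $ i) \<longlongrightarrow> mean_of (PX l k' s (t (Suc k'))) $ i) F"
        by (rule approx_lim[where fX="\<lambda>th. mean_of (PX th k' s (t (Suc k'))) $ i"
              and fY="\<lambda>h th. mean_of (PY h th k' s (t (Suc k'))) $ i", OF hh thD tendsto_vec_nth[OF mX] L beta])
    qed
    have SY: "((\<lambda>x. smom_of (PY (hh x) (th x) k' s (t (Suc k')))) \<longlongrightarrow> smom_of (PX l k' s (t (Suc k')))) F"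
    proof (rule vec_tendstoI, rule vec_tendstoI)
      fix i j
      obtain L where L: "\<forall>th\<in>Dth. \<forall>h>0. \<bar>smom_of (PX th k' s (t (Suc k'))) $ i $ j - smom_of (PY h th k' s (t (Suc k'))) $ i $ j\<bar> \<le> L * h ^ beta"
        using smom_bnd[OF k'] by blast
      show "((\<lambda>x. smom_of (PY (hh x) (th x) k' s (t (Suc k'))) $ i $ j) \<longlongrightarrow> smom_of (PX l k' s (t (Suc k'))) $ i $ j) F"
        by (rule approx_lim[where fX="\<lambda>th. smom_of (PX th k' s (t (Suc k'))) $ i $ j"
              and fY="\<lambda>h th. smom_of (PY h th k' s (t (Suc k'))) $ i $ j", OF hh thD tendsto_vec_nth[OF tendsto_vec_nth[OF SX]] L beta])
    qed
    have pd: "posdef (smom_of (PX l k' s (t (Suc k'))) - outer (mean_of (PX l k' s (t (Suc k')))))"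
      using PX_posdef[OF l k', of s] unfolding cov_of_def outer_def .
    show "((\<lambda>x. Fq (zs k) (mean_of (PY (hh x) (th x) (k - 1) (zs (k - 1)) (t k)))
             (smom_of (PY (hh x) (th x) (k - 1) (zs (k - 1)) (t k)))) \<longlongrightarrow>
          Fq (zs k) (mean_of (PX l (k - 1) (zs (k - 1)) (t k))) (smom_of (PX l (k - 1) (zs (k - 1)) (t k)))) F"
      using tendsto_Fq[OF mY SY pd, of "zs k"] unfolding kk s_def by simp
  qed
  have pw: "((\<lambda>h. thetahat_h h w) \<longlongrightarrow> thetahat w) (at_right 0)" if w: "w \<in> space P" for w
  proof (rule tendsto_at_right_sequentially[where a=0 and b="1::real", OF zero_less_one])
    fix S :: "nat \<Rightarrow> real"
    assume Spos: "\<And>n. 0 < S n" and "\<And>n. S n < 1" and "decseq S" and S0: "S \<longlonglongrightarrow> 0"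
    define zs where "zs = (\<lambda>k. z k w)"
    define ts where "ts = thetahat w"
    define th where "th = (\<lambda>n. thetahat_h (S n) w)"
    have tsD: "ts \<in> Dth" and tsmin: "\<And>x. x \<in> Dth \<Longrightarrow> U_exact PX t Nobs ts zs \<le> U_exact PX t Nobs x zs"
      and tsuniq: "\<And>x. x \<in> Dth \<Longrightarrow> U_exact PX t Nobs x zs = U_exact PX t Nobs ts zs \<Longrightarrow> x = ts"
      using thetahat[OF w] unfolding ts_def zs_def by auto
    have thD: "\<And>n. th n \<in> Dth" using thetahat_h[OF Spos w] unfolding th_def by auto
    have thmin: "\<And>n. U_approx PY t Nobs (S n) (th n) zs \<le> U_approx PY t Nobs (S n) ts zs"
      using thetahat_h[OF Spos w] tsD unfolding th_def zs_def by auto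
    show "(\<lambda>n. thetahat_h (S n) w) \<longlonglongrightarrow> thetahat w"
      unfolding th_def[symmetric] ts_def[symmetric]
    proof (rule ccontr)
      assume nc: "\<not> th \<longlonglongrightarrow> ts"
      then obtain e where e: "e > 0" and fr: "\<And>no. \<exists>n\<ge>no. \<not> dist (th n) ts < e"
        unfolding LIMSEQ_def by auto
      define A where "A = {n. e \<le> dist (th n) ts}"
      have infA: "infinite A" unfolding infinite_nat_iff_unbounded_le A_def using fr by (auto simp: not_less)
      define r0 where "r0 = enumerate A"
      have r0: "strict_mono r0" "\<And>n. r0 n \<in> A"
        unfolding r0_def using infA by (auto intro: strict_mono_enumerate enumerate_in_set)
      obtain l r1 where l: "l \<in> Dth" and r1: "strict_mono r1" and lim: "((th \<circ> r0) \<circ> r1) \<longlonglongrightarrow> l"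
        using Dth(1) thD unfolding compact_def by (metis comp_apply)
      define \<sigma> where "\<sigma> = r0 \<circ> r1"
      have \<sigma>: "strict_mono \<sigma>" unfolding \<sigma>_def using r0(1) r1 by (rule strict_mono_o)
      have lim': "(\<lambda>n. th (\<sigma> n)) \<longlonglongrightarrow> l" using lim unfolding \<sigma>_def by (simp add: comp_def)
      have far: "\<And>n. e \<le> dist (th (\<sigma> n)) ts" using r0(2) unfolding \<sigma>_def A_def by simp
      have "e \<le> dist l ts"
        using LIMSEQ_le_const[OF tendsto_dist[OF lim' tendsto_const]] far by blast
      then have lts: "l \<noteq> ts" using e by auto
      have Ss: "(\<lambda>n. S (\<sigma> n)) \<longlonglongrightarrow> 0" using LIMSEQ_subseq_LIMSEQ[OF S0 \<sigma>] by (simp add: comp_def)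
      have c1: "(\<lambda>n. U_approx PY t Nobs (S (\<sigma> n)) (th (\<sigma> n)) zs) \<longlonglongrightarrow> U_exact PX t Nobs l zs"
        by (rule conv_U[OF Ss _ lim' _ l]) (use Spos thD in auto)
      have c2: "(\<lambda>n. U_approx PY t Nobs (S (\<sigma> n)) ts zs) \<longlonglongrightarrow> U_exact PX t Nobs ts zs"
        by (rule conv_U[OF Ss _ tendsto_const _ tsD]) (use Spos tsD in auto)
      have "U_exact PX t Nobs l zs \<le> U_exact PX t Nobs ts zs"
        using LIMSEQ_le[OF c1 c2] thmin by blast
      with tsmin[OF l] have "U_exact PX t Nobs l zs = U_exact PX t Nobs ts zs" by simp
      with tsuniq[OF l] lts show False by simp
    qed
  qed
  have part1: "\<forall>w\<in>space P. ((\<lambda>h. norm (thetahat_h h w - thetahat w)) \<longlongrightarrow> 0) (at_right 0)"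
  proof
    fix w assume w: "w \<in> space P"
    show "((\<lambda>h. norm (thetahat_h h w - thetahat w)) \<longlongrightarrow> 0) (at_right 0)"
      using tendsto_norm[OF tendsto_diff[OF pw[OF w] tendsto_const[of "thetahat w"]]] by simp
  qed
  obtain B where B: "\<And>x. x \<in> Dth \<Longrightarrow> norm x \<le> B"
    using compact_imp_bounded[OF Dth(1)] unfolding bounded_iff by blast
  have part2: "((\<lambda>h. \<integral>w. norm (thetahat_h h w - thetahat w) \<partial>P) \<longlongrightarrow> 0) (at_right 0)"
  proof (rule tendsto_at_right_sequentially[where a=0 and b="1::real", OF zero_less_one])
    fix S :: "nat \<Rightarrow> real"
    assume Spos: "\<And>n. 0 < S n" and "\<And>n. S n < 1" and "decseq S" and S0: "S \<longlonglongrightarrow> 0"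
    have fS: "filterlim S (at_right 0) sequentially"
      by (rule tendsto_imp_filterlim_at_right[OF S0]) (use Spos in simp)
    have "(\<lambda>n. \<integral>w. norm (thetahat_h (S n) w - thetahat w) \<partial>P) \<longlonglongrightarrow> (\<integral>w. 0 \<partial>P)"
    proof (rule integral_dominated_convergence[where w="\<lambda>_. 2 * B"])
      show "(\<lambda>w. 0::real) \<in> borel_measurable P" by simp
      show "\<And>n. (\<lambda>w. norm (thetahat_h (S n) w - thetahat w)) \<in> borel_measurable P"
        using thetahat_h_meas[OF Spos] thetahat_meas by measurable
      show "integrable P (\<lambda>_. 2 * B)" by simp
      show "AE w in P. (\<lambda>n. norm (thetahat_h (S n) w - thetahat w)) \<longlonglongrightarrow> 0"
      proof (rule AE_I2)
        fix w assume w: "w \<in> space P"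
        show "(\<lambda>n. norm (thetahat_h (S n) w - thetahat w)) \<longlonglongrightarrow> 0"
          using filterlim_compose[OF part1[rule_format, OF w] fS] .
      qed
      show "AE w in P. norm (norm (thetahat_h (S n) w - thetahat w)) \<le> 2 * B" for n
      proof (rule AE_I2)
        fix w assume w: "w \<in> space P"
        have "norm (thetahat_h (S n) w - thetahat w) \<le> norm (thetahat_h (S n) w) + norm (thetahat w)"
          by (rule norm_triangle_ineq4)
        also have "\<dots> \<le> B + B" using B thetahat_h[OF Spos w] thetahat[OF w] by (intro add_mono) auto
        finally show "norm (norm (thetahat_h (S n) w - thetahat w)) \<le> 2 * B" by simp
      qed
    qed
    then show "(\<lambda>n. \<integral>w. norm (thetahat_h (S n) w - thetahat w) \<partial>P) \<longlonglongrightarrow> 0" by simp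
  qed
  show ?thesis using part1 part2 by blast
qed

end
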